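(* Let $f_E$ be the solution of the discrete wave equation in the cone $|j|+|k|<n$ with boundary conditions $(0;1,0,0,0)$. Then for all $(j,k,n)\in\Lambda^+$ with $n\ge 1$, $$f_E(j,k,n)=\frac12\sum_{s=1}^{n-1}f_0(j-s,k,n-s).$$
   Context: Let $\Lambda^+=\{(j,k,n)\in\mathbb Z^2\times\mathbb Z_{\ge0}: j+k+n\text{ odd}\}$. The fundamental solution $f_0:\Lambda^+\to\mathbb R$ is defined by: $f_0(j,k,0)=0$ for all $j,k$; $f_0(0,0,1)=1$ and $f_0(j,k,1)=0$ for all other $(j,k)$; and for all $(j,k,n+1)\in\Lambda^+$ with $n\ge1$, $f_0(j,k,n+1)+f_0(j,k,n-1)=\tfrac12\big(f_0(j+1,k,n)+f_0(j-1,k,n)+f_0(j,k+1,n)+f_0(j,k-1,n)\big)$ (the discrete wave equation). Given $b_0,b_E,b_N,b_W,b_S\in\mathbb C$, $f:\Lambda^+\to\mathbb C$ solves the discrete wave equation in the cone $|j|+|k|<n$ with boundary conditions $(b_0;b_E,b_N,b_W,b_S)$ if: (0) $f(j,k,n)=0$ whenever $|j|+|k|\ge n$; (1) $f(0,0,1)=b_0$; (2) for each $n\ge1$: $f(-n,0,n+1)=\tfrac12(f(-n+1,0,n)+b_W)$, $f(0,n,n+1)=\tfrac12(f(0,n-1,n)+b_N)$, $f(0,-n,n+1)=\tfrac12(f(0,-n+1,n)+b_S)$, $f(n,0,n+1)=\tfrac12(f(n-1,0,n)+b_E)$; (3) for each $(j,k,n+1)\in\Lambda^+$ with $n\ge1$,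 $|j|+|k|\le n$, $\{|j|,|k|\}\ne\{0,n\}$, the discrete wave equation above holds for $f$. These conditions determine $f$ uniquely. *)

theory Defs
  imports Complex_Main
begin

definition in_Lambda :: "int \<Rightarrow> int \<Rightarrow> nat \<Rightarrow> bool" where
  "in_Lambda j k n \<longleftrightarrow> odd (j + k + int n)"

text \<open>Fundamental solution f_0.  Defined on all of int x int x nat by the
recurrence; only its values on Lambda+ matter (the recurrence at points of
Lambda+ only refers to points of Lambda+).\<close>
fun f0 :: "int \<Rightarrow> int \<Rightarrow> nat \<Rightarrow> real" where
  "f0 j k 0 = 0"
| "f0 j k (Suc 0) = (if j = 0 \<and> k = 0 then 1 else 0)"
| "f0 j k (Suc (Suc n)) =
     (f0 (j + 1) k (Suc n) + f0 (j - 1) k (Suc n) + f0 j (k + 1) (Suc n) + f0 j (k - 1) (Suc n)) / 2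
     - f0 j k n"

definition solves_cone ::
  "complex \<Rightarrow> complex \<Rightarrow> complex \<Rightarrow> complex \<Rightarrow> complex \<Rightarrow> (int \<Rightarrow> int \<Rightarrow> nat \<Rightarrow> complex) \<Rightarrow> bool" where
  "solves_cone b0 bE bN bW bS f \<longleftrightarrow>
     (\<forall>j k n. in_Lambda j k n \<and> \<bar>j\<bar> + \<bar>k\<bar> \<ge> int n \<longrightarrow> f j k n = 0) \<and>
     f 0 0 1 = b0 \<and>
     (\<forall>n::nat. n \<ge> 1 \<longrightarrow>
        f (- int n) 0 (n + 1) = (f (- int n + 1) 0 n + bW) / 2 \<and>
        f 0 (int n) (n + 1) = (f 0 (int n - 1) n + bN) / 2 \<and>
        f 0 (- int n) (n + 1) = (f 0 (- int n + 1) n + bS) / 2 \<and>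
        f (int n) 0 (n + 1) = (f (int n - 1) 0 n + bE) / 2) \<and>
     (\<forall>j k n. in_Lambda j k (n + 1) \<and> n \<ge> 1 \<and> \<bar>j\<bar> + \<bar>k\<bar> \<le> int n \<and>
        {\<bar>j\<bar>, \<bar>k\<bar>} \<noteq> {0, int n} \<longrightarrow>
        f j k (n + 1) + f j k (n - 1) =
          (f (j + 1) k n + f (j - 1) k n + f j (k + 1) n + f j (k - 1) n) / 2)"

end

theory Submission
  imports Defs
begin

lemma f0_zero: "\<bar>j\<bar> + \<bar>k\<bar> \<ge> int n \<Longrightarrow> f0 j k n = 0"
proof (induction j k n rule: f0.induct)
  case (3 j k n)
  have a: "f0 (j + 1) k (Suc n) = 0" by (rule "3.IH"(1)) (use "3.prems" in auto)
  have b: "f0 (j - 1) k (Suc n) = 0" by (rule "3.IH"(2)) (use "3.prems" in auto)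
  have c: "f0 j (k + 1) (Suc n) = 0" by (rule "3.IH"(3)) (use "3.prems" in auto)
  have d: "f0 j (k - 1) (Suc n) = 0" by (rule "3.IH"(4)) (use "3.prems" in auto)
  have e: "f0 j k n = 0" by (rule "3.IH"(5)) (use "3.prems" in auto)
  show ?case using a b c d e by simp
qed auto

definition F :: "int \<Rightarrow> int \<Rightarrow> nat \<Rightarrow> real" where
  "F j k n = (\<Sum>t<n. f0 (j - int n + int t) k t)"

lemma F_zero: "\<bar>j\<bar> + \<bar>k\<bar> \<ge> int n \<Longrightarrow> F j k n = 0"
  unfolding F_def by (intro sum.neutral ballI f0_zero) auto

lemma F_rec: "F j k (Suc (Suc m)) + F j k m =
   (F (j+1) k (Suc m) + F (j-1) k (Suc m) + F j (k+1) (Suc m) + F j (k-1) (Suc m)) / 2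
   + (if j = int (Suc m) \<and> k = 0 then 1 else 0)"
proof -
  have A: "F j k (Suc (Suc m)) = f0 (j - int m - 1) k 1 +
     (\<Sum>t<m. f0 (j - int m + int t) k (Suc (Suc t)))"
    unfolding F_def by (simp only: sum.lessThan_Suc_shift) (simp add: algebra_simps del: f0.simps(3) sum.lessThan_Suc)
  have B1: "F (j+1) k (Suc m) = (\<Sum>t<m. f0 (j - int m + int t + 1) k (Suc t))"
    unfolding F_def by (simp only: sum.lessThan_Suc_shift) (simp add: algebra_simps del: f0.simps(3) sum.lessThan_Suc)
  have B2: "F (j-1) k (Suc m) = (\<Sum>t<m. f0 (j - int m + int t - 1) k (Suc t))"
    unfolding F_def by (simp only: sum.lessThan_Suc_shift) (simp add: algebra_simps del: f0.simps(3) sum.lessThan_Suc)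
  have B3: "F j (k+1) (Suc m) = (\<Sum>t<m. f0 (j - int m + int t) (k+1) (Suc t))"
    unfolding F_def by (simp only: sum.lessThan_Suc_shift) (simp add: algebra_simps del: f0.simps(3) sum.lessThan_Suc)
  have B4: "F j (k-1) (Suc m) = (\<Sum>t<m. f0 (j - int m + int t) (k-1) (Suc t))"
    unfolding F_def by (simp only: sum.lessThan_Suc_shift) (simp add: algebra_simps del: f0.simps(3) sum.lessThan_Suc)
  have C: "F j k m = (\<Sum>t<m. f0 (j - int m + int t) k t)" unfolding F_def by simp
  have D: "(\<Sum>t<m. f0 (j - int m + int t) k (Suc (Suc t))) =
     (\<Sum>t<m. (f0 (j - int m + int t + 1) k (Suc t) + f0 (j - int m + int t - 1) k (Suc t)
        + f0 (j - int m + int t) (k+1) (Suc t) + f0 (j - int m + int t) (k - 1) (Suc t)) / 2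
        - f0 (j - int m + int t) k t)"
    by simp
  have E: "f0 (j - int m - 1) k 1 = (if j = int (Suc m) \<and> k = 0 then 1 else 0)"
    by simp
  show ?thesis
    apply (simp only: A B1 B2 B3 B4 C D E)
    apply (simp only: sum_subtractf sum.distrib sum_divide_distrib[symmetric])
    done
qed

lemma sum_conv: "(\<Sum>s = 1..n - 1. f0 (j - int s) k (n - s)) = F j k n"
proof -
  have "F j k n = f0 (j - int n) k 0 + (\<Sum>t\<in>{1..<n}. f0 (j - int n + int t) k t)"
    unfolding F_def
    by (cases n) (auto simp: sum.atLeast_Suc_lessThan atLeast0LessThan[symmetric] lessThan_atLeast0)
  also have "(\<Sum>t\<in>{1..<n}. f0 (j - int n + int t) k t) = (\<Sum>s = 1..n - 1. f0 (j - int s) k (n - s))"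
    by (rule sum.reindex_bij_witness[of _ "\<lambda>s. n - s" "\<lambda>t. n - t"]) (auto simp: algebra_simps)
  finally show ?thesis by simp
qed

lemma main_aux:
  assumes S: "solves_cone 0 1 0 0 0 fE"
  shows "\<forall>j k. in_Lambda j k n \<longrightarrow> fE j k n = complex_of_real (F j k n) / 2"
proof (induction n rule: less_induct)
  case (less n)
  note out = S[unfolded solves_cone_def, THEN conjunct1, rule_format]
  note b0 = S[unfolded solves_cone_def, THEN conjunct2, THEN conjunct1]
  note bd = S[unfolded solves_cone_def, THEN conjunct2, THEN conjunct2, THEN conjunct1, rule_format]
  note wv = S[unfolded solves_cone_def, THEN conjunct2, THEN conjunct2, THEN conjunct2, rule_format]
  show ?case
  proof (intro allI impI)
    fix j k assume L: "in_Lambda j k n"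
    show "fE j k n = complex_of_real (F j k n) / 2"
    proof (cases "\<bar>j\<bar> + \<bar>k\<bar> \<ge> int n")
      case True
      then show ?thesis using out[OF conjI[OF L True]] F_zero[OF True] by simp
    next
      case False
      then obtain m where nm: "n = Suc m" by (cases n) auto
      show ?thesis
      proof (cases m)
        case 0
        with False nm have "j = 0" "k = 0" by auto
        then show ?thesis using b0 nm 0 by (simp add: F_def)
      next
        case (Suc m')
        have m1: "m \<ge> 1" using Suc by simp
        have par: "odd (j + k + int m + 1)" using L nm by (simp add: in_Lambda_def add.assoc)
        have small: "\<bar>j\<bar> + \<bar>k\<bar> \<le> int m"
        proof -
          have "\<bar>j\<bar> + \<bar>k\<bar> < int m + 1" using False nm by simp
          moreover have "odd (\<bar>j\<bar> + \<bar>k\<bar> + int m + 1)" using par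
            by (smt (verit, ccfv_SIG) even_add even_minus abs_of_nonneg abs_of_nonpos)
          ultimately show ?thesis
            by (smt (verit, best) odd_pos even_add)
        qed
        have IHm: "\<And>a b. in_Lambda a b m \<Longrightarrow> fE a b m = complex_of_real (F a b m) / 2"
          using less nm by simp
        have IHm1: "\<And>a b. in_Lambda a b (m - 1) \<Longrightarrow> fE a b (m-1) = complex_of_real (F a b (m-1)) / 2"
          using less nm by simp
        have Fr: "F j k (m+1) + F j k (m-1) =
           (F (j+1) k m + F (j-1) k m + F j (k+1) m + F j (k-1) m) / 2
           + (if j = int m \<and> k = 0 then 1 else 0)"
          using F_rec[of j k m'] Suc by simp
        have Lm: "\<And>a b. odd (a + b + int m) \<Longrightarrow> in_Lambda a b m" by (simp add: in_Lambda_def)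
        note bdm = bd[OF m1]
        show ?thesis
        proof (cases "{\<bar>j\<bar>, \<bar>k\<bar>} = {0, int m}")
          case True
          then have "(j = int m \<and> k = 0) \<or> (j = - int m \<and> k = 0) \<or> (j = 0 \<and> k = int m) \<or> (j = 0 \<and> k = - int m)"
            using m1 by (auto simp: doubleton_eq_iff abs_if split: if_splits)
          then show ?thesis
          proof (elim disjE conjE)
            assume jk: "j = int m" "k = 0"
            have z: "F (j+1) k m = 0" "F j (k+1) m = 0" "F j (k-1) m = 0" "F j k (m-1) = 0"
              using jk by (auto intro!: F_zero)
            have i: "fE (int m - 1) 0 m = complex_of_real (F (int m - 1) 0 m) / 2"
              by (rule IHm, rule Lm) (use m1 in simp)
            have "F j k (m+1) = F (j-1) k m / 2 + 1" using Fr z jk by simp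
            then have c: "complex_of_real (F j k (m+1)) = complex_of_real (F (j-1) k m) / 2 + 1"
              by simp
            have "fE j k n = (fE (int m - 1) 0 m + 1) / 2" using bdm jk nm by simp
            also have "\<dots> = (complex_of_real (F (j-1) k m) / 2 + 1) / 2" using i jk by simp
            also have "\<dots> = complex_of_real (F j k n) / 2" using c nm by simp
            finally show ?thesis .
          next
            assume jk: "j = - int m" "k = 0"
            have z: "F (j-1) k m = 0" "F j (k+1) m = 0" "F j (k-1) m = 0" "F j k (m-1) = 0"
              using jk by (auto intro!: F_zero)
            have i: "fE (- int m + 1) 0 m = complex_of_real (F (- int m + 1) 0 m) / 2"
              by (rule IHm, rule Lm) (use m1 in simp)
            have "F j k (m+1) = F (j+1) k m / 2" using Fr z jk m1 by simp
            then have c: "complex_of_real (F j k (m+1)) = complex_of_real (F (j+1) k m) / 2"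
              by (metis of_real_divide of_real_numeral)
            have "fE j k n = (fE (- int m + 1) 0 m + 0) / 2" using bdm jk nm by simp
            also have "\<dots> = complex_of_real (F (j+1) k m) / 2 / 2" using i jk by (simp add: mult.commute)
            also have "\<dots> = complex_of_real (F j k n) / 2" using c nm by simp
            finally show ?thesis .
          next
            assume jk: "j = 0" "k = int m"
            have z: "F (j-1) k m = 0" "F (j+1) k m = 0" "F j (k+1) m = 0" "F j k (m-1) = 0"
              using jk by (auto intro!: F_zero)
            have i: "fE 0 (int m - 1) m = complex_of_real (F 0 (int m - 1) m) / 2"
              by (rule IHm, rule Lm) (use m1 in simp)
            have "F j k (m+1) = F j (k-1) m / 2" using Fr z jk m1 by simp
            then have c: "complex_of_real (F j k (m+1)) = complex_of_real (F j (k-1) m) / 2"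
              by (metis of_real_divide of_real_numeral)
            have "fE j k n = (fE 0 (int m - 1) m + 0) / 2" using bdm jk nm by simp
            also have "\<dots> = complex_of_real (F j (k-1) m) / 2 / 2" using i jk by (simp add: mult.commute)
            also have "\<dots> = complex_of_real (F j k n) / 2" using c nm by simp
            finally show ?thesis .
          next
            assume jk: "j = 0" "k = - int m"
            have z: "F (j-1) k m = 0" "F (j+1) k m = 0" "F j (k-1) m = 0" "F j k (m-1) = 0"
              using jk by (auto intro!: F_zero)
            have i: "fE 0 (- int m + 1) m = complex_of_real (F 0 (- int m + 1) m) / 2"
              by (rule IHm, rule Lm) (use m1 in simp)
            have "F j k (m+1) = F j (k+1) m / 2" using Fr z jk m1 by simp
            then have c: "complex_of_real (F j k (m+1)) = complex_of_real (F j (k+1) m) / 2"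
              by (metis of_real_divide of_real_numeral)
            have "fE j k n = (fE 0 (- int m + 1) m + 0) / 2" using bdm jk nm by simp
            also have "\<dots> = complex_of_real (F j (k+1) m) / 2 / 2" using i jk by (simp add: mult.commute)
            also have "\<dots> = complex_of_real (F j k n) / 2" using c nm by simp
            finally show ?thesis .
          qed
        next
          case False
          have nb: "\<not> (j = int m \<and> k = 0)" using False by auto
          have w: "fE j k (m + 1) + fE j k (m - 1) =
             (fE (j + 1) k m + fE (j - 1) k m + fE j (k + 1) m + fE j (k - 1) m) / 2"
            by (rule wv) (use L nm m1 small False in simp)
          have i1: "fE (j + 1) k m = complex_of_real (F (j + 1) k m) / 2"
            by (rule IHm, rule Lm) (use par in presburger)
          have i2: "fE (j - 1) k m = complex_of_real (F (j - 1) k m) / 2"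
            by (rule IHm, rule Lm) (use par in presburger)
          have i3: "fE j (k + 1) m = complex_of_real (F j (k + 1) m) / 2"
            by (rule IHm, rule Lm) (use par in presburger)
          have i4: "fE j (k - 1) m = complex_of_real (F j (k - 1) m) / 2"
            by (rule IHm, rule Lm) (use par in presburger)
          have i5: "fE j k (m - 1) = complex_of_real (F j k (m - 1)) / 2"
            by (rule IHm1) (use par m1 in \<open>simp add: in_Lambda_def of_nat_diff\<close>)
          have Fr': "F j k (m+1) = (F (j+1) k m + F (j-1) k m + F j (k+1) m + F j (k-1) m) / 2
              - F j k (m-1)" using Fr nb by (simp only: if_False)
          have "complex_of_real (F j k (m+1)) = complex_of_real ((F (j+1) k m + F (j-1) k m + F j (k+1) m + F j (k-1) m) / 2
              - F j k (m-1))" using Fr' by simp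
          then have "complex_of_real (F j k (m+1)) = (complex_of_real (F (j+1) k m) + complex_of_real (F (j-1) k m)
              + complex_of_real (F j (k+1) m) + complex_of_real (F j (k-1) m)) / 2
              - complex_of_real (F j k (m-1))" by simp
          note cc = this
          have ce: "complex_of_real (F j k (m+1)) / 2 = (complex_of_real (F (j+1) k m) / 2 + complex_of_real (F (j-1) k m) / 2
              + complex_of_real (F j (k+1) m) / 2 + complex_of_real (F j (k-1) m) / 2) / 2
              - complex_of_real (F j k (m-1)) / 2" by (subst cc) (simp add: field_simps)
          have "fE j k (m+1) = (fE (j + 1) k m + fE (j - 1) k m + fE j (k + 1) m + fE j (k - 1) m) / 2
              - fE j k (m - 1)" using w by (simp add: eq_diff_eq)
          also have "\<dots> = complex_of_real (F j k (m+1)) / 2"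
            unfolding ce by (simp only: i1 i2 i3 i4 i5)
          finally show ?thesis using nm by simp
        qed
      qed
    qed
  qed
qed

theorem mainTheorem5:
  fixes fE :: "int \<Rightarrow> int \<Rightarrow> nat \<Rightarrow> complex"
  assumes "solves_cone 0 1 0 0 0 fE"
  shows "\<forall>j k n. in_Lambda j k n \<and> n \<ge> 1 \<longrightarrow>
           fE j k n = (\<Sum>s = 1..n - 1. complex_of_real (f0 (j - int s) k (n - s))) / 2"
  using main_aux[OF assms] sum_conv
  by (metis of_real_sum)

end
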